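(* Let $n\geq2$ be finite. If $\mathfrak A\in SA_n$ is completely representable, then so is its minimal completion $\mathrm{Cm}\,\mathrm{At}\mathfrak A$.
   Context: $SA_n=\mathbf{Mod}(\Sigma'_n)$, where $\Sigma'_n$ (signature $\wedge,-,s^i_j,s_{ij}$, $i\neq j<n$) consists of the Boolean axioms, equations saying each $s^i_j,s_{ij}$ is a Boolean endomorphism, and $t_1(x)=t_2(x)$ for all words $t_1,t_2$ with the same associated map in ${}^nn$ (words map to compositions of the transpositions $[i,j]$ and replacements $[i/j]$, where $[i/j]$ sends $i$ to $j$ and fixes the rest). A completely representable algebra is atomic; for atomic $\mathfrak A$ the minimal completion is the complex algebra of its atom structure: universe $\mathcal P(\mathrm{At}\mathfrak A)$ with Boolean set operations and, for each unary operator $f$, $f(Y)=\{a\in\mathrm{At}\mathfrak A:\exists b\in Y,\ a\leq f(b)\}$; $\mathfrak A$ embeds in it via $x\mapsto\{a\in\mathrm{At}\mathfrak A:a\le x\}$. $\mathfrak B$ is completely representable if there is an injective homomorphism $g:\mathfrak B\to\wp(D)$ with $D$ dipermutable (closed under $s\mapsto s\circ[i/j]$ and $s\mapsto s\circ[i,j]$) and $g(\prod Y)=\bigcap g[Y]$ whenever $\prod Y$ exists; $\wp(D)$ carries $\cap$, complement relative to $D$, $S^i_j(X)=\{q\in D:q\circ[i/j]\in X\}$, $S_{ij}(X)=\{q\in D:q\circ[i,j]\in X\}$. *)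

theory Defs
  imports "HOL-Library.FuncSet"
begin

text \<open>An algebra of signature (meet, complement, s^i_j, s_ij), with an explicit carrier.
  sub i j is the operation s^i_j (associated map [i/j]), swp i j is s_ij
  (associated map the transposition [i,j]).\<close>

record 'a sa_alg =
  carrier :: "'a set"
  meet :: "'a \<Rightarrow> 'a \<Rightarrow> 'a"
  cmpl :: "'a \<Rightarrow> 'a"
  sub :: "nat \<Rightarrow> nat \<Rightarrow> 'a \<Rightarrow> 'a"
  swp :: "nat \<Rightarrow> nat \<Rightarrow> 'a \<Rightarrow> 'a"

text \<open>Boolean axioms in the signature (meet, complement): commutativity,
  associativity and (the dual of) Huntington's axiom.\<close>

definition boolean_alg :: "'a sa_alg \<Rightarrow> bool" where
  "boolean_alg A \<longleftrightarrow>
     carrier A \<noteq> {} \<and>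
     (\<forall>x\<in>carrier A. \<forall>y\<in>carrier A. meet A x y \<in> carrier A) \<and>
     (\<forall>x\<in>carrier A. cmpl A x \<in> carrier A) \<and>
     (\<forall>x\<in>carrier A. \<forall>y\<in>carrier A. meet A x y = meet A y x) \<and>
     (\<forall>x\<in>carrier A. \<forall>y\<in>carrier A. \<forall>z\<in>carrier A.
         meet A (meet A x y) z = meet A x (meet A y z)) \<and>
     (\<forall>x\<in>carrier A. \<forall>y\<in>carrier A.
         meet A (cmpl A (meet A (cmpl A x) y)) (cmpl A (meet A (cmpl A x) (cmpl A y))) = x)"

definition bool_endo :: "'a sa_alg \<Rightarrow> ('a \<Rightarrow> 'a) \<Rightarrow> bool" where
  "bool_endo A f \<longleftrightarrow>
     (\<forall>x\<in>carrier A. f x \<in> carrier A) \<and>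
     (\<forall>x\<in>carrier A. \<forall>y\<in>carrier A. f (meet A x y) = meet A (f x) (f y)) \<and>
     (\<forall>x\<in>carrier A. f (cmpl A x) = cmpl A (f x))"

datatype letter = Sub nat nat | Swp nat nat

fun valid_letter :: "nat \<Rightarrow> letter \<Rightarrow> bool" where
  "valid_letter n (Sub i j) \<longleftrightarrow> i \<noteq> j \<and> i < n \<and> j < n"
| "valid_letter n (Swp i j) \<longleftrightarrow> i \<noteq> j \<and> i < n \<and> j < n"

definition repl :: "nat \<Rightarrow> nat \<Rightarrow> nat \<Rightarrow> nat" where
  "repl i j = id(i := j)"

definition transp :: "nat \<Rightarrow> nat \<Rightarrow> nat \<Rightarrow> nat" where
  "transp i j = id(i := j, j := i)"

fun letter_map :: "letter \<Rightarrow> nat \<Rightarrow> nat" where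
  "letter_map (Sub i j) = repl i j"
| "letter_map (Swp i j) = transp i j"

fun letter_op :: "'a sa_alg \<Rightarrow> letter \<Rightarrow> 'a \<Rightarrow> 'a" where
  "letter_op A (Sub i j) = sub A i j"
| "letter_op A (Swp i j) = swp A i j"

text \<open>The word f1 f2 ... fk acts as x \<mapsto> f1 (f2 (... (fk x))) and has associated
  map the composition [f1] \<circ> [f2] \<circ> ... \<circ> [fk] (the convention matching the
  set-theoretic operations S^i_j X = {q. q \<circ> [i/j] \<in> X}).\<close>

definition word_op :: "'a sa_alg \<Rightarrow> letter list \<Rightarrow> 'a \<Rightarrow> 'a" where
  "word_op A w = foldr (\<lambda>l f. letter_op A l \<circ> f) w id"

definition word_map :: "letter list \<Rightarrow> nat \<Rightarrow> nat" where
  "word_map w = foldr (\<lambda>l f. letter_map l \<circ> f) w id"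

definition SA :: "nat \<Rightarrow> 'a sa_alg \<Rightarrow> bool" where
  "SA n A \<longleftrightarrow>
     boolean_alg A \<and>
     (\<forall>i j. i \<noteq> j \<and> i < n \<and> j < n \<longrightarrow> bool_endo A (sub A i j) \<and> bool_endo A (swp A i j)) \<and>
     (\<forall>w1 w2. list_all (valid_letter n) w1 \<and> list_all (valid_letter n) w2 \<and>
              (\<forall>k<n. word_map w1 k = word_map w2 k) \<longrightarrow>
              (\<forall>x\<in>carrier A. word_op A w1 x = word_op A w2 x))"

definition leq :: "'a sa_alg \<Rightarrow> 'a \<Rightarrow> 'a \<Rightarrow> bool" where
  "leq A x y \<longleftrightarrow> meet A x y = x"

definition zero :: "'a sa_alg \<Rightarrow> 'a" where
  "zero A = meet A (SOME x. x \<in> carrier A) (cmpl A (SOME x. x \<in> carrier A))"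

definition atoms :: "'a sa_alg \<Rightarrow> 'a set" where
  "atoms A = {a \<in> carrier A. a \<noteq> zero A \<and>
       (\<forall>b\<in>carrier A. leq A b a \<longrightarrow> b = zero A \<or> b = a)}"

definition is_inf :: "'a sa_alg \<Rightarrow> 'a set \<Rightarrow> 'a \<Rightarrow> bool" where
  "is_inf A Y p \<longleftrightarrow> p \<in> carrier A \<and> (\<forall>y\<in>Y. leq A p y) \<and>
     (\<forall>z\<in>carrier A. (\<forall>y\<in>Y. leq A z y) \<longrightarrow> leq A z p)"

definition Cm_At :: "'a sa_alg \<Rightarrow> 'a set sa_alg" where
  "Cm_At A =
     \<lparr> carrier = Pow (atoms A),
       meet = (\<inter>),
       cmpl = (\<lambda>Y. atoms A - Y),
       sub = (\<lambda>i j Y. {a \<in> atoms A. \<exists>b\<in>Y. leq A a (sub A i j b)}),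
       swp = (\<lambda>i j Y. {a \<in> atoms A. \<exists>b\<in>Y. leq A a (swp A i j b)}) \<rparr>"

definition dipermutable :: "nat \<Rightarrow> (nat \<Rightarrow> 'u) set \<Rightarrow> bool" where
  "dipermutable n D \<longleftrightarrow>
     D \<subseteq> ({..<n} \<rightarrow>\<^sub>E (UNIV :: 'u set)) \<and>
     (\<forall>i j q. i \<noteq> j \<and> i < n \<and> j < n \<and> q \<in> D \<longrightarrow>
        q \<circ> repl i j \<in> D \<and> q \<circ> transp i j \<in> D)"

definition comp_rep_hom ::
  "nat \<Rightarrow> 'a sa_alg \<Rightarrow> (nat \<Rightarrow> 'u) set \<Rightarrow> ('a \<Rightarrow> (nat \<Rightarrow> 'u) set) \<Rightarrow> bool" where
  "comp_rep_hom n B D g \<longleftrightarrow>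
     (\<forall>x\<in>carrier B. g x \<subseteq> D) \<and>
     inj_on g (carrier B) \<and>
     (\<forall>x\<in>carrier B. \<forall>y\<in>carrier B. g (meet B x y) = g x \<inter> g y) \<and>
     (\<forall>x\<in>carrier B. g (cmpl B x) = D - g x) \<and>
     (\<forall>i j. i \<noteq> j \<and> i < n \<and> j < n \<longrightarrow>
        (\<forall>x\<in>carrier B. g (sub B i j x) = {q \<in> D. q \<circ> repl i j \<in> g x}) \<and>
        (\<forall>x\<in>carrier B. g (swp B i j x) = {q \<in> D. q \<circ> transp i j \<in> g x})) \<and>
     (\<forall>Y p. Y \<subseteq> carrier B \<and> is_inf B Y p \<longrightarrow> g p = D \<inter> \<Inter> (g ` Y))"

definition completely_representable :: "nat \<Rightarrow> 'a sa_alg \<Rightarrow> 'u itself \<Rightarrow> bool" where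
  "completely_representable n B (_ :: 'u itself) \<longleftrightarrow>
     (\<exists>(D :: (nat \<Rightarrow> 'u) set) g. dipermutable n D \<and> comp_rep_hom n B D g)"

end

theory Submission
  imports Defs
begin

lemma crh_basic:
  assumes B: "boolean_alg A" and H: "comp_rep_hom n A D g"
  shows crh_sub: "\<And>x. x \<in> carrier A \<Longrightarrow> g x \<subseteq> D"
    and crh_inj: "inj_on g (carrier A)"
    and crh_meet: "\<And>x y. x \<in> carrier A \<Longrightarrow> y \<in> carrier A \<Longrightarrow> g (meet A x y) = g x \<inter> g y"
    and crh_cmpl: "\<And>x. x \<in> carrier A \<Longrightarrow> g (cmpl A x) = D - g x"
    and meet_cl: "\<And>x y. x \<in> carrier A \<Longrightarrow> y \<in> carrier A \<Longrightarrow> meet A x y \<in> carrier A"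
    and cmpl_cl: "\<And>x. x \<in> carrier A \<Longrightarrow> cmpl A x \<in> carrier A"
    and ne: "carrier A \<noteq> {}"
    and crh_inf: "\<And>Y p. Y \<subseteq> carrier A \<Longrightarrow> is_inf A Y p \<Longrightarrow> g p = D \<inter> \<Inter> (g ` Y)"
  using B H unfolding boolean_alg_def comp_rep_hom_def by auto

lemma leq_iff:
  assumes B: "boolean_alg A" and H: "comp_rep_hom n A D g"
    and x: "x \<in> carrier A" and y: "y \<in> carrier A"
  shows "leq A x y \<longleftrightarrow> g x \<subseteq> g y"
proof -
  have "leq A x y \<longleftrightarrow> g (meet A x y) = g x"
    unfolding leq_def by (rule inj_on_eq_iff[OF crh_inj[OF B H] meet_cl[OF B H x y] x, symmetric])
  also have "\<dots> \<longleftrightarrow> g x \<subseteq> g y" using crh_meet[OF B H x y] by blast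
  finally show ?thesis .
qed

lemma zero_props:
  assumes B: "boolean_alg A" and H: "comp_rep_hom n A D g"
  shows "zero A \<in> carrier A" "g (zero A) = {}"
proof -
  let ?c = "SOME x. x \<in> carrier A"
  have c: "?c \<in> carrier A" using ne[OF B H] by (simp add: some_in_eq)
  show "zero A \<in> carrier A" unfolding zero_def using meet_cl[OF B H c cmpl_cl[OF B H c]] .
  show "g (zero A) = {}" unfolding zero_def
    using crh_meet[OF B H c cmpl_cl[OF B H c]] crh_cmpl[OF B H c] by auto
qed

lemma g_empty:
  assumes B: "boolean_alg A" and H: "comp_rep_hom n A D g"
    and x: "x \<in> carrier A" and e: "g x = {}"
  shows "x = zero A"
  using inj_on_eq_iff[OF crh_inj[OF B H] x zero_props(1)[OF B H]] zero_props(2)[OF B H] e by simp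

lemma atoms_iff:
  assumes B: "boolean_alg A" and H: "comp_rep_hom n A D g"
  shows "a \<in> atoms A \<longleftrightarrow> a \<in> carrier A \<and> g a \<noteq> {} \<and>
           (\<forall>b\<in>carrier A. g b \<subseteq> g a \<longrightarrow> g b = {} \<or> g b = g a)"
proof -
  have z: "\<And>b. b \<in> carrier A \<Longrightarrow> b = zero A \<longleftrightarrow> g b = {}"
    using g_empty[OF B H] zero_props[OF B H] by blast
  have e: "\<And>b. b \<in> carrier A \<Longrightarrow> a \<in> carrier A \<Longrightarrow> b = a \<longleftrightarrow> g b = g a"
    using inj_on_eq_iff[OF crh_inj[OF B H]] by simp
  show ?thesis
  proof (cases "a \<in> carrier A")
    case True
    have "(\<forall>b\<in>carrier A. leq A b a \<longrightarrow> b = zero A \<or> b = a) \<longleftrightarrow>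
          (\<forall>b\<in>carrier A. g b \<subseteq> g a \<longrightarrow> g b = {} \<or> g b = g a)"
      using z e[OF _ True] leq_iff[OF B H _ True] by simp
    moreover have "a \<noteq> zero A \<longleftrightarrow> g a \<noteq> {}" using z True by blast
    ultimately show ?thesis unfolding atoms_def using True by blast
  qed (simp add: atoms_def)
qed

lemma disj:
  assumes B: "boolean_alg A" and H: "comp_rep_hom n A D g"
    and a: "a \<in> atoms A" and b: "b \<in> atoms A" and q: "q \<in> g a" "q \<in> g b"
  shows "a = b"
proof -
  have ac: "a \<in> carrier A" and bc: "b \<in> carrier A" using a b by (auto simp: atoms_def)
  have m: "meet A a b \<in> carrier A" using meet_cl[OF B H ac bc] .
  have gm: "g (meet A a b) = g a \<inter> g b" using crh_meet[OF B H ac bc] .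
  have "g (meet A a b) = g a" using a m gm q unfolding atoms_iff[OF B H] by blast
  hence "g a \<subseteq> g b" using gm by blast
  hence "g a = g b" using b ac q unfolding atoms_iff[OF B H] by blast
  thus ?thesis using inj_on_eq_iff[OF crh_inj[OF B H] ac bc] by simp
qed

lemma cover:
  assumes B: "boolean_alg A" and H: "comp_rep_hom n A D g" and q: "q \<in> D"
  shows "\<exists>a\<in>atoms A. q \<in> g a"
proof -
  define F where "F = {y \<in> carrier A. q \<in> g y}"
  show ?thesis
  proof (cases "\<exists>z\<in>F. \<forall>y\<in>F. g z \<subseteq> g y")
    case True
    then obtain z where zF: "z \<in> F" and low: "\<forall>y\<in>F. g z \<subseteq> g y" by blast
    have zc: "z \<in> carrier A" and qz: "q \<in> g z" using zF F_def by auto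
    have "z \<in> atoms A" unfolding atoms_iff[OF B H]
    proof (intro conjI ballI impI)
      fix b assume bc: "b \<in> carrier A" and sb: "g b \<subseteq> g z"
      show "g b = {} \<or> g b = g z"
      proof (cases "q \<in> g b")
        case True hence "b \<in> F" using bc F_def by blast
        thus ?thesis using low sb by blast
      next
        case False
        hence "cmpl A b \<in> F" unfolding F_def using cmpl_cl[OF B H bc] crh_cmpl[OF B H bc] q by blast
        hence "g z \<subseteq> D - g b" using low crh_cmpl[OF B H bc] by auto
        thus ?thesis using sb by blast
      qed
    qed (use zc qz in auto)
    thus ?thesis using qz by blast
  next
    case False
    have zc: "zero A \<in> carrier A" and gz: "g (zero A) = {}" using zero_props[OF B H] by auto
    have "is_inf A F (zero A)" unfolding is_inf_def
    proof (intro conjI ballI impI)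
      show "zero A \<in> carrier A" by fact
      fix y assume "y \<in> F" thus "leq A (zero A) y" using leq_iff[OF B H zc] gz F_def by auto
    next
      fix z assume zc': "z \<in> carrier A" and low: "\<forall>y\<in>F. leq A z y"
      hence low': "\<forall>y\<in>F. g z \<subseteq> g y" using leq_iff[OF B H] F_def by auto
      have "z \<notin> F" using False low' by blast
      hence "q \<notin> g z" using zc' unfolding F_def by blast
      hence "cmpl A z \<in> F" unfolding F_def using cmpl_cl[OF B H zc'] crh_cmpl[OF B H zc'] q by blast
      hence "g z \<subseteq> D - g z" using low' crh_cmpl[OF B H zc'] by auto
      hence "g z = {}" by blast
      thus "leq A z (zero A)" using leq_iff[OF B H zc' zc] by simp
    qed
    moreover have "F \<subseteq> carrier A" unfolding F_def by blast
    ultimately have e: "g (zero A) = D \<inter> \<Inter> (g ` F)" by (rule crh_inf[OF B H, rotated])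
    have m: "q \<in> D \<inter> \<Inter> (g ` F)" using q unfolding F_def by blast
    have "q \<in> g (zero A)" unfolding e by (rule m)
    thus ?thesis unfolding gz by (rule emptyE)
  qed
qed

theorem theorem4p20:
  fixes n :: nat and A :: "'a sa_alg"
  assumes "n \<ge> 2"
    and "SA n A"
    and "completely_representable n A TYPE('u)"
  shows "completely_representable n (Cm_At A) TYPE('u)"
proof -
  have B: "boolean_alg A" using assms(2) by (simp add: SA_def)
  have endo: "\<And>i j. i \<noteq> j \<Longrightarrow> i < n \<Longrightarrow> j < n \<Longrightarrow> bool_endo A (sub A i j) \<and> bool_endo A (swp A i j)"
    using assms(2) by (simp add: SA_def)
  obtain D :: "(nat \<Rightarrow> 'u) set" and g where dp: "dipermutable n D" and H: "comp_rep_hom n A D g"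
    using assms(3) unfolding completely_representable_def by blast
  have atc: "\<And>a. a \<in> atoms A \<Longrightarrow> a \<in> carrier A" by (simp add: atoms_def)
  have atne: "\<And>a. a \<in> atoms A \<Longrightarrow> g a \<noteq> {}" using atoms_iff[OF B H] by blast
  have atsub: "\<And>a. a \<in> atoms A \<Longrightarrow> g a \<subseteq> D" using crh_sub[OF B H] atc by blast
  have cov: "\<And>q. q \<in> D \<Longrightarrow> \<exists>a\<in>atoms A. q \<in> g a" using cover[OF B H] by blast
  have dis: "\<And>a b q. a \<in> atoms A \<Longrightarrow> b \<in> atoms A \<Longrightarrow> q \<in> g a \<Longrightarrow> q \<in> g b \<Longrightarrow> a = b"
    using disj[OF B H] by blast
  have atle: "\<And>a x q. a \<in> atoms A \<Longrightarrow> x \<in> carrier A \<Longrightarrow> q \<in> g a \<Longrightarrow> q \<in> g x \<Longrightarrow> leq A a x"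
  proof -
    fix a x q assume a: "a \<in> atoms A" and x: "x \<in> carrier A" and qa: "q \<in> g a" and qx: "q \<in> g x"
    have ac: "a \<in> carrier A" using atc a .
    have m: "meet A a x \<in> carrier A" using meet_cl[OF B H ac x] .
    have gm: "g (meet A a x) = g a \<inter> g x" using crh_meet[OF B H ac x] .
    have "g (meet A a x) = g a" using a m gm qa qx unfolding atoms_iff[OF B H] by blast
    thus "leq A a x" using leq_iff[OF B H ac x] gm by blast
  qed
  have leqg: "\<And>a x. a \<in> atoms A \<Longrightarrow> x \<in> carrier A \<Longrightarrow> leq A a x \<Longrightarrow> g a \<subseteq> g x"
    using leq_iff[OF B H] atc by blast
  define G where "G Y = \<Union> (g ` Y)" for Y
  have opgen: "\<And>f r Y. (\<forall>x\<in>carrier A. f x \<in> carrier A) \<Longrightarrow>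
        (\<forall>x\<in>carrier A. g (f x) = {q \<in> D. q \<circ> r \<in> g x}) \<Longrightarrow> Y \<subseteq> atoms A \<Longrightarrow>
        G {a \<in> atoms A. \<exists>b\<in>Y. leq A a (f b)} = {q \<in> D. q \<circ> r \<in> G Y}"
  proof -
    fix f r Y assume fc: "\<forall>x\<in>carrier A. f x \<in> carrier A"
      and fg: "\<forall>x\<in>carrier A. g (f x) = {q \<in> D. q \<circ> r \<in> g x}" and Y: "Y \<subseteq> atoms A"
    show "G {a \<in> atoms A. \<exists>b\<in>Y. leq A a (f b)} = {q \<in> D. q \<circ> r \<in> G Y}"
    proof (rule set_eqI, rule iffI)
      fix q assume "q \<in> G {a \<in> atoms A. \<exists>b\<in>Y. leq A a (f b)}"
      then obtain a b where a: "a \<in> atoms A" and b: "b \<in> Y" and l: "leq A a (f b)" and qa: "q \<in> g a"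
        unfolding G_def by blast
      have bc: "b \<in> carrier A" using b Y atc by blast
      have "q \<in> g (f b)" using leqg[OF a fc[rule_format, OF bc] l] qa by blast
      thus "q \<in> {q \<in> D. q \<circ> r \<in> G Y}" using fg bc b unfolding G_def by blast
    next
      fix q assume "q \<in> {q \<in> D. q \<circ> r \<in> G Y}"
      then obtain b where qD: "q \<in> D" and b: "b \<in> Y" and qb: "q \<circ> r \<in> g b" unfolding G_def by blast
      have bc: "b \<in> carrier A" using b Y atc by blast
      have qf: "q \<in> g (f b)" using fg bc qD qb by blast
      obtain a where a: "a \<in> atoms A" and qa: "q \<in> g a" using cov[OF qD] by blast
      have "leq A a (f b)" using atle[OF a fc[rule_format, OF bc] qa qf] .
      thus "q \<in> G {a \<in> atoms A. \<exists>b\<in>Y. leq A a (f b)}" using a b qa unfolding G_def by blast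
    qed
  qed
  have "comp_rep_hom n (Cm_At A) D G"
    unfolding comp_rep_hom_def
  proof (intro conjI allI impI ballI)
    fix x assume "x \<in> carrier (Cm_At A)"
    thus "G x \<subseteq> D" using atsub by (auto simp: G_def Cm_At_def)
  next
    show "inj_on G (carrier (Cm_At A))"
    proof (rule inj_onI)
      fix X Y assume X: "X \<in> carrier (Cm_At A)" and Y: "Y \<in> carrier (Cm_At A)" and e: "G X = G Y"
      have X': "X \<subseteq> atoms A" and Y': "Y \<subseteq> atoms A" using X Y by (auto simp: Cm_At_def)
      have s: "\<And>X Y. X \<subseteq> atoms A \<Longrightarrow> Y \<subseteq> atoms A \<Longrightarrow> G X = G Y \<Longrightarrow> X \<subseteq> Y"
      proof
        fix X Y a assume X: "X \<subseteq> atoms A" and Y: "Y \<subseteq> atoms A" and e: "G X = G Y" and aX: "a \<in> X"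
        obtain q where q: "q \<in> g a" using atne aX X by blast
        then obtain b where "b \<in> Y" "q \<in> g b" using e aX unfolding G_def by blast
        thus "a \<in> Y" using dis[of a b q] aX X Y q by blast
      qed
      show "X = Y" using s[OF X' Y' e] s[OF Y' X' e[symmetric]] by blast
    qed
  next
    fix X Y assume X: "X \<in> carrier (Cm_At A)" and Y: "Y \<in> carrier (Cm_At A)"
    have X': "X \<subseteq> atoms A" and Y': "Y \<subseteq> atoms A" using X Y by (auto simp: Cm_At_def)
    have "G (X \<inter> Y) = G X \<inter> G Y"
    proof (rule set_eqI, rule iffI)
      fix q assume "q \<in> G (X \<inter> Y)" thus "q \<in> G X \<inter> G Y" unfolding G_def by blast
    next
      fix q assume "q \<in> G X \<inter> G Y"
      then obtain a b where "a \<in> X" "q \<in> g a" "b \<in> Y" "q \<in> g b" unfolding G_def by blast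
      moreover hence "a = b" using dis X' Y' by blast
      ultimately show "q \<in> G (X \<inter> Y)" unfolding G_def by blast
    qed
    thus "G (meet (Cm_At A) X Y) = G X \<inter> G Y" by (simp add: Cm_At_def)
  next
    fix X assume X: "X \<in> carrier (Cm_At A)"
    have X': "X \<subseteq> atoms A" using X by (auto simp: Cm_At_def)
    have "G (atoms A - X) = D - G X"
    proof (rule set_eqI, rule iffI)
      fix q assume "q \<in> G (atoms A - X)"
      then obtain a where a: "a \<in> atoms A" "a \<notin> X" "q \<in> g a" unfolding G_def by blast
      have "q \<notin> G X"
      proof
        assume "q \<in> G X"
        then obtain b where "b \<in> X" "q \<in> g b" unfolding G_def by blast
        thus False using dis[of a b q] a X' by blast
      qed
      thus "q \<in> D - G X" using a atsub by blast
    next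
      fix q assume q: "q \<in> D - G X"
      then obtain a where "a \<in> atoms A" "q \<in> g a" using cov by blast
      moreover hence "a \<notin> X" using q unfolding G_def by blast
      ultimately show "q \<in> G (atoms A - X)" unfolding G_def by blast
    qed
    thus "G (cmpl (Cm_At A) X) = D - G X" by (simp add: Cm_At_def)
  next
    fix i j X assume ij: "i \<noteq> j \<and> i < n \<and> j < n" and X: "X \<in> carrier (Cm_At A)"
    have e: "bool_endo A (sub A i j)" using endo ij by blast
    have "\<forall>x\<in>carrier A. g (sub A i j x) = {q \<in> D. q \<circ> repl i j \<in> g x}"
      using H ij unfolding comp_rep_hom_def by blast
    moreover have "\<forall>x\<in>carrier A. sub A i j x \<in> carrier A" using e by (simp add: bool_endo_def)
    ultimately show "G (sub (Cm_At A) i j X) = {q \<in> D. q \<circ> repl i j \<in> G X}"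
      using opgen X by (simp add: Cm_At_def)
  next
    fix i j X assume ij: "i \<noteq> j \<and> i < n \<and> j < n" and X: "X \<in> carrier (Cm_At A)"
    have e: "bool_endo A (swp A i j)" using endo ij by blast
    have "\<forall>x\<in>carrier A. g (swp A i j x) = {q \<in> D. q \<circ> transp i j \<in> g x}"
      using H ij unfolding comp_rep_hom_def by blast
    moreover have "\<forall>x\<in>carrier A. swp A i j x \<in> carrier A" using e by (simp add: bool_endo_def)
    ultimately show "G (swp (Cm_At A) i j X) = {q \<in> D. q \<circ> transp i j \<in> G X}"
      using opgen X by (simp add: Cm_At_def)
  next
    fix Ys P assume a: "Ys \<subseteq> carrier (Cm_At A) \<and> is_inf (Cm_At A) Ys P"
    have Ys: "\<And>Y. Y \<in> Ys \<Longrightarrow> Y \<subseteq> atoms A" using a by (auto simp: Cm_At_def)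
    have inf: "P \<subseteq> atoms A" "\<And>Y. Y \<in> Ys \<Longrightarrow> P \<subseteq> Y"
      "\<And>Z. Z \<subseteq> atoms A \<Longrightarrow> (\<forall>Y\<in>Ys. Z \<subseteq> Y) \<Longrightarrow> Z \<subseteq> P"
    proof -
      have ii: "is_inf (Cm_At A) Ys P" using a by blast
      have lq: "\<And>U V. leq (Cm_At A) U V \<longleftrightarrow> U \<subseteq> V" by (auto simp: leq_def Cm_At_def)
      have ca: "carrier (Cm_At A) = Pow (atoms A)" by (simp add: Cm_At_def)
      show "P \<subseteq> atoms A" "\<And>Y. Y \<in> Ys \<Longrightarrow> P \<subseteq> Y"
        "\<And>Z. Z \<subseteq> atoms A \<Longrightarrow> (\<forall>Y\<in>Ys. Z \<subseteq> Y) \<Longrightarrow> Z \<subseteq> P"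
        using ii unfolding is_inf_def lq ca by auto
    qed
    have P: "P = atoms A \<inter> \<Inter> Ys"
      using inf(1,2) inf(3)[of "atoms A \<inter> \<Inter> Ys"] by blast
    show "G P = D \<inter> \<Inter> (G ` Ys)"
    proof (rule set_eqI, rule iffI)
      fix q assume "q \<in> G P"
      then obtain a where "a \<in> P" "q \<in> g a" unfolding G_def by blast
      thus "q \<in> D \<inter> \<Inter> (G ` Ys)" using inf(1,2) atsub unfolding G_def by blast
    next
      fix q assume q: "q \<in> D \<inter> \<Inter> (G ` Ys)"
      obtain a where a: "a \<in> atoms A" and qa: "q \<in> g a" using cov q by blast
      have "\<forall>Y\<in>Ys. a \<in> Y"
      proof
        fix Y assume Y: "Y \<in> Ys"
        then obtain b where "b \<in> Y" "q \<in> g b" using q unfolding G_def by blast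
        thus "a \<in> Y" using dis[of a b q] a qa Ys[OF Y] by blast
      qed
      thus "q \<in> G P" using a qa P unfolding G_def by blast
    qed
  qed
  thus ?thesis unfolding completely_representable_def using dp by blast
qed

end
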